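(* Let $P$ be the poset on ground set $\{x_1,x_2,x_3,x_4,y,z\}$ whose strict comparabilities are exactly $x_1<x_2<x_3<x_4$ (together with those implied by transitivity: $x_1<x_3$, $x_1<x_4$, $x_2<x_4$), $x_1<z$, $x_2<z$, and $y<x_4$; all other pairs of distinct elements are incomparable. Then $P$ is not a unit OC interval order, but $P$ has a unit mixed interval representation, for instance $x_1\mapsto[0,1]$, $x_2\mapsto(1,2)$, $y\mapsto[1,2]$, $x_3\mapsto[2,3)$, $z\mapsto[2,3]$, $x_4\mapsto[3,4]$.
   Context: A finite poset is a unit OC interval order if each element $x$ can be assigned a real interval $I_x$ of length $1$ which is either open $(a,a+1)$ or closed $[a,a+1]$, such that for distinct $x,y$, $x<y$ if and only if $I_x$ and $I_y$ are disjoint and every point of $I_x$ is less than every point of $I_y$. A unit mixed interval representation is defined in the same way except that each $I_x$ may be any of $[a,a+1]$, $(a,a+1)$, $(a,a+1]$, $[a,a+1)$. *)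

theory Defs
  imports Complex_Main
begin

definition unit_OC_interval :: "real set \<Rightarrow> bool" where
  "unit_OC_interval I \<longleftrightarrow> (\<exists>a. I = {a<..<a+1} \<or> I = {a..a+1})"

definition unit_mixed_interval :: "real set \<Rightarrow> bool" where
  "unit_mixed_interval I \<longleftrightarrow>
     (\<exists>a. I = {a..a+1} \<or> I = {a<..<a+1} \<or> I = {a<..a+1} \<or> I = {a..<a+1})"

definition interval_before :: "real set \<Rightarrow> real set \<Rightarrow> bool" where
  "interval_before I J \<longleftrightarrow> I \<inter> J = {} \<and> (\<forall>p\<in>I. \<forall>q\<in>J. p < q)"

definition interval_rep ::
  "(real set \<Rightarrow> bool) \<Rightarrow> ('a \<Rightarrow> 'a \<Rightarrow> bool) \<Rightarrow> ('a \<Rightarrow> real set) \<Rightarrow> bool" where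
  "interval_rep K lt f \<longleftrightarrow>
     (\<forall>x. K (f x)) \<and> (\<forall>x y. x \<noteq> y \<longrightarrow> (lt x y \<longleftrightarrow> interval_before (f x) (f y)))"

definition unit_OC_interval_order :: "('a \<Rightarrow> 'a \<Rightarrow> bool) \<Rightarrow> bool" where
  "unit_OC_interval_order lt \<longleftrightarrow> (\<exists>f. interval_rep unit_OC_interval lt f)"

definition unit_mixed_interval_order :: "('a \<Rightarrow> 'a \<Rightarrow> bool) \<Rightarrow> bool" where
  "unit_mixed_interval_order lt \<longleftrightarrow> (\<exists>f. interval_rep unit_mixed_interval lt f)"

datatype elem = X1 | X2 | X3 | X4 | Y | Z

definition P_less :: "elem \<Rightarrow> elem \<Rightarrow> bool" where
  "P_less u v \<longleftrightarrow> (u, v) \<in> {(X1,X2),(X1,X3),(X1,X4),(X2,X3),(X2,X4),(X3,X4),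
                               (X1,Z),(X2,Z),(Y,X4)}"

fun P_rep :: "elem \<Rightarrow> real set" where
  "P_rep X1 = {0..1}"
| "P_rep X2 = {1<..<2}"
| "P_rep Y = {1..2}"
| "P_rep X3 = {2..<3}"
| "P_rep Z = {2..3}"
| "P_rep X4 = {3..4}"

end

theory Submission
  imports Defs
begin

definition OCi :: "real \<Rightarrow> bool \<Rightarrow> real set" where
  "OCi a t = (if t then {a<..<a+1} else {a..a+1})"

lemma OCi_interior: "c \<in> {a<..<a+1} \<Longrightarrow> c \<in> OCi a t"
  by (auto simp: OCi_def)

lemma before_char:
  "interval_before (OCi a t) (OCi b p) \<longleftrightarrow> (a+1 < b \<or> (a+1 = b \<and> (t \<or> p)))"
proof
  assume "a+1 < b \<or> (a+1 = b \<and> (t \<or> p))"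
  then show "interval_before (OCi a t) (OCi b p)"
    by (cases t; cases p) (auto simp: interval_before_def OCi_def)
next
  assume H: "interval_before (OCi a t) (OCi b p)"
  show "a+1 < b \<or> (a+1 = b \<and> (t \<or> p))"
  proof (rule ccontr)
    assume N: "\<not> ?thesis"
    show False
    proof (cases "b = a+1")
      case True
      with N have "\<not> t" "\<not> p" by auto
      then have "a+1 \<in> OCi a t" "a+1 \<in> OCi b p" using True by (auto simp: OCi_def)
      with H show False by (auto simp: interval_before_def)
    next
      case False
      with N have lt: "b < a+1" by auto
      show False
      proof (cases "b \<le> a - 1")
        case True
        have "a+1/2 \<in> OCi a t" "b+1/2 \<in> OCi b p" by (rule OCi_interior, simp)+
        with H True show False by (fastforce simp: interval_before_def)
      next
        case False
        define m where "m = (max a b + min (a+1) (b+1))/2"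
        have "m \<in> OCi a t" "m \<in> OCi b p"
          by (rule OCi_interior; use lt False in \<open>auto simp: m_def max_def min_def\<close>)+
        with H show False by (auto simp: interval_before_def)
      qed
    qed
  qed
qed

lemma OC_ex: "unit_OC_interval I \<Longrightarrow> \<exists>a t. I = OCi a t"
  unfolding unit_OC_interval_def OCi_def by (metis (full_types))

lemma not_OC: "\<not> unit_OC_interval_order P_less"
proof
  assume "unit_OC_interval_order P_less"
  then obtain f where f: "interval_rep unit_OC_interval P_less f"
    unfolding unit_OC_interval_order_def by blast
  have "\<forall>x. \<exists>a t. f x = OCi a t" using f OC_ex unfolding interval_rep_def by blast
  then obtain a t where ao: "\<And>x. f x = OCi (a x) (t x)" by metis
  have R: "\<And>x y. x \<noteq> y \<Longrightarrow> P_less x y \<longleftrightarrow> (a x+1 < a y \<or> (a x+1 = a y \<and> (t x \<or> t y)))"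
    using f unfolding interval_rep_def by (simp add: ao before_char)
  show False using R[of X1 X2] R[of X2 X3] R[of X3 X4] R[of Y X4] R[of X2 Z] R[of Y X1] R[of X1 Y] R[of Y X3] R[of X3 Y] R[of Y Z] R[of Z Y] R[of Z X4] R[of X4 Z] R[of Z X3] R[of X3 Z] by (simp add: P_less_def) smt
qed

theorem mainTheorem5:
  shows "\<not> unit_OC_interval_order P_less \<and> unit_mixed_interval_order P_less
         \<and> interval_rep unit_mixed_interval P_less P_rep"
proof -
  have rep: "interval_rep unit_mixed_interval P_less P_rep"
    unfolding interval_rep_def
  proof (intro conjI allI impI)
    fix x show "unit_mixed_interval (P_rep x)"
      unfolding unit_mixed_interval_def
      by (cases x) (auto intro: exI[of _ 0] exI[of _ 1] exI[of _ 2] exI[of _ 3])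
  next
    fix x y :: elem assume "x \<noteq> y"
    then show "P_less x y = interval_before (P_rep x) (P_rep y)"
      apply (cases x; cases y)
      apply (auto simp: P_less_def interval_before_def)
      apply (auto simp: disjoint_iff intro: exI[of _ "3/2"])
      subgoal by (drule spec[of _ "3/2"]) simp
      subgoal by (drule spec[of _ "3/2"]) simp
      subgoal by (drule spec[of _ "2"]) simp
      done
  qed
  then show ?thesis using not_OC unfolding unit_mixed_interval_order_def by blast
qed

end
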